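(* Fix $n\ge3$ and $M>0$ satisfying (A) and (B). There exists $\bar\epsilon>0$ such that: if $f:V^n\to[0,1]$ is anonymous and BIC in $\Gamma^0$, then there is a family $\{f_\epsilon\}_{\epsilon\in(0,\bar\epsilon]}$ of anonymous SCFs $f_\epsilon:V^n\to[0,1]$ such that (i) each $f_\epsilon$ is BIC in $\Gamma^\epsilon$, and (ii) $f_\epsilon(v)\to f(v)$ as $\epsilon\to0$ for every $v\in V^n$.
   Context: Fix $n\ge 3$ agents $N=\{1,\dots,n\}$, choosing between Reform $R$ (agent $i$'s utility $v_i$) and Status quo $S$ (utility $0$). Let $M>0$ satisfy (A): $\frac{2}{n}\left[-M^2+M+n-2\right]+\frac{n-2}{n}\left[2M+n-4\right]<0$, and (B): $2M-(n-2)>0$. Let $V=\{-M^2,-1,1,M\}$. For $\epsilon\in[0,1/4]$, the environment $\Gamma^\epsilon$ has independent values $\tilde v_1,\dots,\tilde v_n$ with distributions: for agents $1,2$: $\Pr(-M^2)=0.5-\epsilon$, $\Pr(-1)=\epsilon$, $\Pr(1)=\epsilon$, $\Pr(M)=0.5-\epsilon$; for agents $3,\dots,n$: $\Pr(-M^2)=\epsilon$, $\Pr(-1)=0.5-\epsilon$, $\Pr(1)=0.5-\epsilon$, $\Pr(M)=\epsilon$. An SCF is any $f:V^n\to[0,1]$, defined on all of $V^n$ (including zero-probability profiles). $f$ is anonymous if $f(v)=f(\pi v)$ for all $v\in V^n$ and permutations $\pi$ of $N$, where $\pi v=(v_{\pi(1)},\dots,v_{\pi(n)})$. $f$ is BIC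 in $\Gamma^\epsilon$ if for every agent $i$ and all reports $v_i,v_i'\in V$: $v_i\,\mathbb{E}^\epsilon(f(v_i,\tilde v_{-i}))\ge v_i\,\mathbb{E}^\epsilon(f(v_i',\tilde v_{-i}))$, expectation over $\tilde v_{-i}$ under $\Gamma^\epsilon$. *)

theory Defs
  imports "HOL-Analysis.Analysis" "HOL-Combinatorics.Permutations"
begin

definition Vals :: "real \<Rightarrow> real set" where
  "Vals M = {-(M^2), -1, 1, M}"

definition profiles :: "nat \<Rightarrow> real \<Rightarrow> (nat \<Rightarrow> real) set" where
  "profiles n M = PiE {1..n} (\<lambda>_. Vals M)"

definition pr :: "real \<Rightarrow> real \<Rightarrow> nat \<Rightarrow> real \<Rightarrow> real" where
  "pr M eps i x =
     (if i \<in> {1,2} then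
        (if x = -(M^2) then 1/2 - eps else if x = -1 then eps
         else if x = 1 then eps else if x = M then 1/2 - eps else 0)
      else
        (if x = -(M^2) then eps else if x = -1 then 1/2 - eps
         else if x = 1 then 1/2 - eps else if x = M then eps else 0))"

definition interim :: "nat \<Rightarrow> real \<Rightarrow> real \<Rightarrow> ((nat \<Rightarrow> real) \<Rightarrow> real) \<Rightarrow> nat \<Rightarrow> real \<Rightarrow> real" where
  "interim n M eps f i a =
     (\<Sum>w\<in>PiE ({1..n} - {i}) (\<lambda>_. Vals M).
        (\<Prod>j\<in>{1..n} - {i}. pr M eps j (w j)) * f (w(i := a)))"

definition is_SCF :: "nat \<Rightarrow> real \<Rightarrow> ((nat \<Rightarrow> real) \<Rightarrow> real) \<Rightarrow> bool" where
  "is_SCF n M f \<longleftrightarrow> (\<forall>v\<in>profiles n M. 0 \<le> f v \<and> f v \<le> 1)"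

definition anonymous :: "nat \<Rightarrow> real \<Rightarrow> ((nat \<Rightarrow> real) \<Rightarrow> real) \<Rightarrow> bool" where
  "anonymous n M f \<longleftrightarrow>
     (\<forall>v\<in>profiles n M. \<forall>\<pi>. \<pi> permutes {1..n} \<longrightarrow> f (v \<circ> \<pi>) = f v)"

definition BIC :: "nat \<Rightarrow> real \<Rightarrow> real \<Rightarrow> ((nat \<Rightarrow> real) \<Rightarrow> real) \<Rightarrow> bool" where
  "BIC n M eps f \<longleftrightarrow>
     (\<forall>i\<in>{1..n}. \<forall>a\<in>Vals M. \<forall>b\<in>Vals M.
        a * interim n M eps f i a \<ge> a * interim n M eps f i b)"

end

theory Submission
  imports Defs
begin

lemma Mfacts:
  fixes M :: real assumes "M > 0" "M \<noteq> 1"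
  shows "M \<noteq> -1" "M^2 \<noteq> 1" "-(M^2) \<noteq> M" "M \<noteq> -(M^2)" "-(M^2) \<noteq> -1" "-(M^2) \<noteq> 1"
        "-1 \<noteq> -(M^2)" "1 \<noteq> -(M^2)" "-1 \<noteq> M" "1 \<noteq> M"
proof -
  have sq: "M^2 \<noteq> 1" using assms by (auto simp: power2_eq_1_iff)
  have pos: "M^2 > 0" using assms by simp
  show "M \<noteq> -1" "M^2 \<noteq> 1" "-(M^2) \<noteq> M" "M \<noteq> -(M^2)" "-(M^2) \<noteq> -1" "-(M^2) \<noteq> 1"
        "-1 \<noteq> -(M^2)" "1 \<noteq> -(M^2)" "-1 \<noteq> M" "1 \<noteq> M"
    using assms sq pos by linarith+
qed

lemma sum_pr:
  fixes M :: real assumes "M > 0" "M \<noteq> 1"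
  shows "(\<Sum>x\<in>Vals M. pr M e k x) = 1"
  using Mfacts[OF assms] by (simp add: Vals_def pr_def)




lemma pr_affine: "pr M e k x = pr M 0 k x + e * (pr M 1 k x - pr M 0 k x)"
  by (simp add: pr_def)

lemma finite_Vals: "finite (Vals M)" by (simp add: Vals_def)

lemma prod_sum_PiE_sep:
  fixes p :: "nat \<Rightarrow> real \<Rightarrow> real"
  assumes S: "finite S" and V: "finite V" and j: "j \<in> S" and one: "\<And>k. k \<in> S \<Longrightarrow> (\<Sum>x\<in>V. p k x) = 1"
  shows "(\<Sum>w\<in>PiE S (\<lambda>_. V). (\<Prod>k\<in>S. p k (w k)) * g (w j)) = (\<Sum>x\<in>V. p j x * g x)"
proof -
  have "(\<Prod>k\<in>S. \<Sum>x\<in>V. p k x * (if k = j then g x else 1))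
      = (\<Sum>w\<in>PiE S (\<lambda>_. V). \<Prod>k\<in>S. p k (w k) * (if k = j then g (w k) else 1))"
    by (rule prod_sum_PiE) (use S V in auto)
  also have "\<dots> = (\<Sum>w\<in>PiE S (\<lambda>_. V). (\<Prod>k\<in>S. p k (w k)) * g (w j))"
  proof (rule sum.cong[OF refl])
    fix w
    have "(\<Prod>k\<in>S. p k (w k) * (if k = j then g (w k) else 1))
        = (\<Prod>k\<in>S. p k (w k)) * (\<Prod>k\<in>S. (if k = j then g (w k) else 1))"
      by (rule prod.distrib)
    also have "(\<Prod>k\<in>S. (if k = j then g (w k) else 1)) = g (w j)"
      using S j by (simp add: prod.delta)
    finally show "(\<Prod>k\<in>S. p k (w k) * (if k = j then g (w k) else 1)) = (\<Prod>k\<in>S. p k (w k)) * g (w j)" .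
  qed
  finally have L: "(\<Sum>w\<in>PiE S (\<lambda>_. V). (\<Prod>k\<in>S. p k (w k)) * g (w j))
      = (\<Prod>k\<in>S. \<Sum>x\<in>V. p k x * (if k = j then g x else 1))" by simp
  have "(\<Prod>k\<in>S. \<Sum>x\<in>V. p k x * (if k = j then g x else 1))
      = (\<Sum>x\<in>V. p j x * (if j = j then g x else 1)) * (\<Prod>k\<in>S - {j}. \<Sum>x\<in>V. p k x * (if k = j then g x else 1))"
    using S j by (rule prod.remove)
  also have "(\<Prod>k\<in>S - {j}. \<Sum>x\<in>V. p k x * (if k = j then g x else 1)) = (\<Prod>k\<in>S - {j}. 1)"
    by (rule prod.cong[OF refl]) (use one in auto)
  finally show ?thesis using L by simp
qed

lemma prod_sum_PiE_one:
  fixes p :: "nat \<Rightarrow> real \<Rightarrow> real"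
  assumes S: "finite S" and V: "finite V" and one: "\<And>k. k \<in> S \<Longrightarrow> (\<Sum>x\<in>V. p k x) = 1"
  shows "(\<Sum>w\<in>PiE S (\<lambda>_. V). (\<Prod>k\<in>S. p k (w k))) = 1"
proof -
  have "(\<Prod>k\<in>S. \<Sum>x\<in>V. p k x) = (\<Sum>w\<in>PiE S (\<lambda>_. V). (\<Prod>k\<in>S. p k (w k)))"
    by (rule prod_sum_PiE) (use S V in auto)
  moreover have "(\<Prod>k\<in>S. \<Sum>x\<in>V. p k x) = 1" using one by simp
  ultimately show ?thesis by simp
qed

lemma prod_sum_PiE_sepsum:
  fixes p :: "nat \<Rightarrow> real \<Rightarrow> real"
  assumes S: "finite S" and V: "finite V" and one: "\<And>k. k \<in> S \<Longrightarrow> (\<Sum>x\<in>V. p k x) = 1"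
  shows "(\<Sum>w\<in>PiE S (\<lambda>_. V). (\<Prod>k\<in>S. p k (w k)) * (\<Sum>j\<in>S. g (w j))) = (\<Sum>j\<in>S. \<Sum>x\<in>V. p j x * g x)"
proof -
  have "(\<Sum>w\<in>PiE S (\<lambda>_. V). (\<Prod>k\<in>S. p k (w k)) * (\<Sum>j\<in>S. g (w j)))
     = (\<Sum>w\<in>PiE S (\<lambda>_. V). \<Sum>j\<in>S. (\<Prod>k\<in>S. p k (w k)) * g (w j))"
    by (simp add: sum_distrib_left)
  also have "\<dots> = (\<Sum>j\<in>S. \<Sum>w\<in>PiE S (\<lambda>_. V). (\<Prod>k\<in>S. p k (w k)) * g (w j))"
    by (rule sum.swap)
  also have "\<dots> = (\<Sum>j\<in>S. \<Sum>x\<in>V. p j x * g x)"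
    by (rule sum.cong[OF refl], rule prod_sum_PiE_sep) (use assms in auto)
  finally show ?thesis .
qed

lemma wt_one:
  fixes M :: real assumes "M > 0" "M \<noteq> 1"
  shows "(\<Sum>w\<in>PiE ({1..n}-{i}) (\<lambda>_. Vals M). (\<Prod>k\<in>{1..n}-{i}. pr M e k (w k))) = 1"
  by (rule prod_sum_PiE_one) (auto simp: sum_pr[OF assms] finite_Vals)

lemma interim_diff:
  "interim n M e g i a - interim n M e g i b =
   (\<Sum>w\<in>PiE ({1..n}-{i}) (\<lambda>_. Vals M). (\<Prod>k\<in>{1..n}-{i}. pr M e k (w k)) * (g (w(i:=a)) - g (w(i:=b))))"
  by (simp add: interim_def sum_subtractf right_diff_distrib)

lemma interim_add: "interim n M e (\<lambda>v. g v + h v) i a = interim n M e g i a + interim n M e h i a"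
  by (simp add: interim_def distrib_left sum.distrib)

lemma interim_cmult: "interim n M e (\<lambda>v. c * g v) i a = c * interim n M e g i a"
  by (simp add: interim_def sum_distrib_left mult_ac)

lemma interim_diff_const:
  fixes M :: real assumes "M > 0" "M \<noteq> 1"
    and pw: "\<And>w. w \<in> PiE ({1..n}-{i}) (\<lambda>_. Vals M) \<Longrightarrow> g (w(i:=a)) - g (w(i:=b)) = c"
  shows "interim n M e g i a - interim n M e g i b = c"
proof -
  have "interim n M e g i a - interim n M e g i b =
     (\<Sum>w\<in>PiE ({1..n}-{i}) (\<lambda>_. Vals M). (\<Prod>k\<in>{1..n}-{i}. pr M e k (w k)) * c)"
    unfolding interim_diff by (rule sum.cong[OF refl]) (simp add: pw)
  also have "\<dots> = c" using wt_one[OF assms(1,2)] by (simp add: sum_distrib_right[symmetric])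
  finally show ?thesis .
qed

definition ind :: "real \<Rightarrow> real \<Rightarrow> real" where "ind x y = (if y = x then 1 else 0)"
definition cnt :: "nat \<Rightarrow> (real \<Rightarrow> real) \<Rightarrow> (nat \<Rightarrow> real) \<Rightarrow> real" where
  "cnt n \<phi> v = (\<Sum>j\<in>{1..n}. \<phi> (v j))"
definition posi :: "real \<Rightarrow> real" where "posi y = (if 0 < y then 1 else 0)"
definition hh :: "nat \<Rightarrow> (nat \<Rightarrow> real) \<Rightarrow> real" where "hh n v = (1 + cnt n posi v) / (real n + 2)"

lemma cnt_upd: "i \<in> {1..n} \<Longrightarrow> cnt n \<phi> (w(i:=a)) = \<phi> a + (\<Sum>j\<in>{1..n}-{i}. \<phi> (w j))"
  unfolding cnt_def by (simp add: sum.remove)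

lemma cnt_perm: "\<pi> permutes {1..n} \<Longrightarrow> cnt n \<phi> (v \<circ> \<pi>) = cnt n \<phi> v"
  unfolding cnt_def using sum.permute[of \<pi> "{1..n}" "\<lambda>j. \<phi> (v j)"] by (simp add: comp_def)

lemma interim_cnt_diff:
  fixes M :: real assumes "M > 0" "M \<noteq> 1" "i \<in> {1..n}"
  shows "interim n M e (cnt n \<phi>) i a - interim n M e (cnt n \<phi>) i b = \<phi> a - \<phi> b"
  by (rule interim_diff_const[OF assms(1,2)]) (simp add: cnt_upd[OF assms(3)])

lemma interim_hh_diff:
  fixes M :: real assumes "M > 0" "M \<noteq> 1" "i \<in> {1..n}"
  shows "interim n M e (hh n) i a - interim n M e (hh n) i b = (posi a - posi b) / (real n + 2)"
  by (rule interim_diff_const[OF assms(1,2)]) (simp add: hh_def cnt_upd[OF assms(3)] diff_divide_distrib[symmetric])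

lemma interim_prod_same:
  fixes M :: real assumes "M > 0" "M \<noteq> 1" "i \<in> {1..n}" "\<phi> a = \<phi> b" "\<psi> a = \<psi> b"
  shows "interim n M e (\<lambda>v. cnt n \<phi> v * cnt n \<psi> v) i a - interim n M e (\<lambda>v. cnt n \<phi> v * cnt n \<psi> v) i b = 0"
  by (rule interim_diff_const[OF assms(1,2)]) (simp add: cnt_upd[OF assms(3)] assms(4,5))

lemma interim_prod_diff:
  fixes M :: real assumes "M > 0" "M \<noteq> 1" "i \<in> {1..n}"
    and "\<phi> a = 1" "\<phi> b = 0" "\<psi> a = 0" "\<psi> b = 1"
  shows "interim n M e (\<lambda>v. cnt n \<phi> v * cnt n \<psi> v) i a - interim n M e (\<lambda>v. cnt n \<phi> v * cnt n \<psi> v) i b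
       = (\<Sum>j\<in>{1..n}-{i}. \<Sum>x\<in>Vals M. pr M e j x * (\<psi> x - \<phi> x))"
proof -
  have "interim n M e (\<lambda>v. cnt n \<phi> v * cnt n \<psi> v) i a - interim n M e (\<lambda>v. cnt n \<phi> v * cnt n \<psi> v) i b
     = (\<Sum>w\<in>PiE ({1..n}-{i}) (\<lambda>_. Vals M). (\<Prod>k\<in>{1..n}-{i}. pr M e k (w k)) * (\<Sum>j\<in>{1..n}-{i}. \<psi> (w j) - \<phi> (w j)))"
    unfolding interim_diff
    by (rule sum.cong[OF refl]) (simp add: cnt_upd[OF assms(3)] assms(4-7) sum_subtractf algebra_simps)
  also have "\<dots> = (\<Sum>j\<in>{1..n}-{i}. \<Sum>x\<in>Vals M. pr M e j x * (\<psi> x - \<phi> x))"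
    by (rule prod_sum_PiE_sepsum) (auto simp: sum_pr[OF assms(1,2)] finite_Vals)
  finally show ?thesis .
qed

lemma upd_in_profiles:
  assumes w: "w \<in> PiE ({1..n}-{i}) (\<lambda>_. Vals M)" and i: "i \<in> {1..n}" and a: "a \<in> Vals M"
  shows "w(i:=a) \<in> profiles n M"
  unfolding profiles_def PiE_iff
proof (intro conjI ballI)
  fix k assume "k \<in> {1..n}"
  then show "(w(i:=a)) k \<in> Vals M" using w a by (cases "k = i") (auto simp: PiE_iff)
next
  show "w(i:=a) \<in> extensional {1..n}"
    unfolding extensional_def using w i by (auto simp: PiE_iff extensional_def)
qed

lemma transpose_mem:
  assumes i: "i \<in> {1..n}" and j: "j \<in> {1..n}"
  shows "k \<in> {1..n}-{j} \<longleftrightarrow> Transposition.transpose i j k \<in> {1..n}-{i}"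
proof (cases "k = i")
  case True then show ?thesis using i j by auto
next
  case F1: False
  show ?thesis
  proof (cases "k = j")
    case True then show ?thesis using i j by auto
  next
    case False then show ?thesis using F1 by auto
  qed
qed

lemma comp_transpose_PiE:
  assumes w: "w \<in> PiE ({1..n}-{i}) (\<lambda>_. V)" and i: "i \<in> {1..n}" and j: "j \<in> {1..n}"
  shows "w \<circ> Transposition.transpose i j \<in> PiE ({1..n}-{j}) (\<lambda>_. V)"
  unfolding PiE_iff
proof (intro conjI ballI)
  fix k assume "k \<in> {1..n}-{j}"
  then have "Transposition.transpose i j k \<in> {1..n}-{i}" using transpose_mem[OF i j] by blast
  then show "(w \<circ> Transposition.transpose i j) k \<in> V" using w by (auto simp: PiE_iff)
next
  show "w \<circ> Transposition.transpose i j \<in> extensional ({1..n}-{j})"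
    unfolding extensional_def
  proof (intro CollectI allI impI)
    fix k assume "k \<notin> {1..n}-{j}"
    then have "Transposition.transpose i j k \<notin> {1..n}-{i}" using transpose_mem[OF i j] by blast
    then show "(w \<circ> Transposition.transpose i j) k = undefined" using w by (auto simp: PiE_iff extensional_def)
  qed
qed

lemma interim_sym:
  assumes anon: "anonymous n M f" and i: "i \<in> {1..n}" and j: "j \<in> {1..n}"
    and cls: "i \<in> {1,2} \<longleftrightarrow> j \<in> {1,2}" and a: "a \<in> Vals M"
  shows "interim n M e f i a = interim n M e f j a"
proof -
  define \<pi> where "\<pi> = Transposition.transpose i j"
  have perm: "\<pi> permutes {1..n}" unfolding \<pi>_def using i j by (rule permutes_swap_id)
  have inv: "\<pi> (\<pi> k) = k" for k unfolding \<pi>_def by simp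
  have cl: "\<pi> k \<in> {1,2} \<longleftrightarrow> k \<in> {1,2}" for k
  proof (cases "k = i")
    case True then show ?thesis using cls unfolding \<pi>_def by simp
  next
    case F1: False
    show ?thesis
    proof (cases "k = j")
      case True then show ?thesis using cls unfolding \<pi>_def by simp
    next
      case False then show ?thesis using F1 unfolding \<pi>_def by simp
    qed
  qed
  have prpi: "pr M e (\<pi> k) x = pr M e k x" for k x
    unfolding pr_def by (simp only: cl)
  have ji: "\<pi> j = i" "\<pi> i = j" unfolding \<pi>_def by auto
  show ?thesis
    unfolding interim_def
  proof (rule sum.reindex_bij_witness[where i="\<lambda>w. w \<circ> \<pi>" and j="\<lambda>w. w \<circ> \<pi>"])
    fix w assume w: "w \<in> PiE ({1..n}-{i}) (\<lambda>_. Vals M)"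
    show "w \<circ> \<pi> \<circ> \<pi> = w" by (simp add: comp_def inv)
    show "w \<circ> \<pi> \<in> PiE ({1..n}-{j}) (\<lambda>_. Vals M)"
      unfolding \<pi>_def using comp_transpose_PiE[OF w i j] .
    have P: "(\<Prod>k\<in>{1..n}-{i}. pr M e k (w k)) = (\<Prod>k\<in>{1..n}-{j}. pr M e k ((w \<circ> \<pi>) k))"
    proof (rule prod.reindex_bij_witness[where i="\<pi>" and j="\<pi>"])
      fix k assume k: "k \<in> {1..n}-{i}"
      show "\<pi> (\<pi> k) = k" by (rule inv)
      show "\<pi> k \<in> {1..n}-{j}" using k transpose_mem[OF j i] unfolding \<pi>_def by (simp add: Transposition.transpose_commute)
      show "pr M e (\<pi> k) ((w \<circ> \<pi>) (\<pi> k)) = pr M e k (w k)" by (simp add: inv prpi)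
    next
      fix k assume k: "k \<in> {1..n}-{j}"
      show "\<pi> (\<pi> k) = k" by (rule inv)
      show "\<pi> k \<in> {1..n}-{i}" using k transpose_mem[OF i j] unfolding \<pi>_def by blast
    qed
    have U: "(w \<circ> \<pi>)(j := a) = (w(i:=a)) \<circ> \<pi>"
    proof
      fix k show "((w \<circ> \<pi>)(j := a)) k = ((w(i:=a)) \<circ> \<pi>) k"
      proof (cases "k = j")
        case True then show ?thesis using ji by simp
      next
        case False
        have "\<pi> k \<noteq> i" using False inv ji by metis
        then show ?thesis using False by simp
      qed
    qed
    have F: "f ((w(i:=a)) \<circ> \<pi>) = f (w(i:=a))"
      using anon upd_in_profiles[OF w i a] perm unfolding anonymous_def by blast
    show "(\<Prod>k\<in>{1..n}-{j}. pr M e k ((w \<circ> \<pi>) k)) * f ((w \<circ> \<pi>)(j := a)) =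
          (\<Prod>k\<in>{1..n}-{i}. pr M e k (w k)) * f (w(i := a))"
      using P U F by simp
  next
    fix w assume w: "w \<in> PiE ({1..n}-{j}) (\<lambda>_. Vals M)"
    show "w \<circ> \<pi> \<circ> \<pi> = w" by (simp add: comp_def inv)
    show "w \<circ> \<pi> \<in> PiE ({1..n}-{i}) (\<lambda>_. Vals M)"
      unfolding \<pi>_def using comp_transpose_PiE[OF w j i] by (simp add: Transposition.transpose_commute)
  qed
qed

lemma interim_tendsto:
  "((\<lambda>e. interim n M e g i a) \<longlongrightarrow> interim n M 0 g i a) (at_right 0)"
proof -
  have eq: "interim n M e g i a = (\<Sum>w\<in>PiE ({1..n}-{i}) (\<lambda>_. Vals M).
      (\<Prod>k\<in>{1..n}-{i}. pr M 0 k (w k) + e * (pr M 1 k (w k) - pr M 0 k (w k))) * g (w(i:=a)))" for e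
    unfolding interim_def by (simp only: pr_affine[of M e])
  have "((\<lambda>e. (\<Sum>w\<in>PiE ({1..n}-{i}) (\<lambda>_. Vals M).
      (\<Prod>k\<in>{1..n}-{i}. pr M 0 k (w k) + e * (pr M 1 k (w k) - pr M 0 k (w k))) * g (w(i:=a))))
     \<longlongrightarrow> (\<Sum>w\<in>PiE ({1..n}-{i}) (\<lambda>_. Vals M).
      (\<Prod>k\<in>{1..n}-{i}. pr M 0 k (w k) + 0 * (pr M 1 k (w k) - pr M 0 k (w k))) * g (w(i:=a)))) (at_right 0)"
    by (intro tendsto_intros)
  moreover have "(\<Sum>w\<in>PiE ({1..n}-{i}) (\<lambda>_. Vals M).
      (\<Prod>k\<in>{1..n}-{i}. pr M 0 k (w k) + 0 * (pr M 1 k (w k) - pr M 0 k (w k))) * g (w(i:=a)))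
     = interim n M 0 g i a" by (simp add: interim_def)
  ultimately show ?thesis unfolding eq by simp
qed

lemma BIC_D:
  fixes M :: real
  assumes "BIC n M e f" "k \<in> {1..n}" "M > 0"
  shows "interim n M e f k M = interim n M e f k 1"
    and "interim n M e f k (-1) = interim n M e f k (-(M^2))"
    and "interim n M e f k 1 \<ge> interim n M e f k (-1)"
proof -
  have V: "M \<in> Vals M" "1 \<in> Vals M" "-1 \<in> Vals M" "-(M^2) \<in> Vals M" by (auto simp: Vals_def)
  have b: "\<And>a b. a \<in> Vals M \<Longrightarrow> b \<in> Vals M \<Longrightarrow> a * interim n M e f k a \<ge> a * interim n M e f k b"
    using assms unfolding BIC_def by blast
  have M2: "M^2 > 0" using assms by simp
  from b[OF V(1) V(2)] b[OF V(2) V(1)] assms(3)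
  show "interim n M e f k M = interim n M e f k 1" by auto
  have h1: "interim n M e f k (-1) \<le> interim n M e f k (-(M^2))" using b[OF V(3) V(4)] by simp
  have "-(M^2) * interim n M e f k (-1) \<le> -(M^2) * interim n M e f k (-(M^2))" using b[OF V(4) V(3)] .
  then have h2: "interim n M e f k (-(M^2)) \<le> interim n M e f k (-1)"
    using M2 by (simp add: mult_le_cancel_left)
  from h1 h2 show "interim n M e f k (-1) = interim n M e f k (-(M^2))" by simp
  from b[OF V(2) V(3)]
  show "interim n M e f k 1 \<ge> interim n M e f k (-1)" by simp
qed

lemma BIC_I:
  fixes M :: real
  assumes anon: "anonymous n M f" and n: "n \<ge> 3" and M: "M > 0"
    and up: "\<And>k. k \<in> {1,3} \<Longrightarrow> interim n M e f k M = interim n M e f k 1"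
    and dn: "\<And>k. k \<in> {1,3} \<Longrightarrow> interim n M e f k (-1) = interim n M e f k (-(M^2))"
    and gp: "\<And>k. k \<in> {1,3} \<Longrightarrow> interim n M e f k 1 \<ge> interim n M e f k (-1)"
  shows "BIC n M e f"
  unfolding BIC_def
proof (intro ballI)
  fix i a b assume i: "i \<in> {1..n}" and a: "a \<in> Vals M" and b: "b \<in> Vals M"
  obtain k where k: "k \<in> {1,3}" and sym: "\<And>c. c \<in> Vals M \<Longrightarrow> interim n M e f i c = interim n M e f k c"
  proof (cases "i \<in> {1,2}")
    case True
    then show ?thesis using that[of 1] interim_sym[OF anon i, of 1] n i by auto
  next
    case False
    then show ?thesis using that[of 3] interim_sym[OF anon i, of 3] n i by auto
  qed
  have V: "M \<in> Vals M" "1 \<in> Vals M" "-1 \<in> Vals M" "-(M^2) \<in> Vals M" by (auto simp: Vals_def)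
  define Q where "Q c = interim n M e f k c" for c
  have Qs: "Q M = Q 1" "Q (-1) = Q (-(M^2))" "Q 1 \<ge> Q (-1)" using up[OF k] dn[OF k] gp[OF k] by (auto simp: Q_def)
  have M2: "M^2 > 0" using M by simp
  have hi: "Q c \<le> Q 1" and lo: "Q (-1) \<le> Q c" if "c \<in> Vals M" for c
    using that Qs unfolding Vals_def by auto
  have "a * Q a \<ge> a * Q b"
  proof (cases "a > 0")
    case True
    then have "a = 1 \<or> a = M" using a M2 unfolding Vals_def by auto
    then have "Q a = Q 1" using Qs by auto
    then show ?thesis using hi[OF b] True by (simp add: mult_left_mono)
  next
    case False
    then have "a = -1 \<or> a = -(M^2)" using a M unfolding Vals_def by auto
    then have "Q a = Q (-1)" using Qs by auto
    then show ?thesis using lo[OF b] False by (simp add: mult_left_mono_neg)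
  qed
  then show "a * interim n M e f i a \<ge> a * interim n M e f i b" using sym a b by (simp add: Q_def)
qed

lemma alpha_diff:
  fixes M :: real assumes "M > 0" "M \<noteq> 1" "n \<ge> 3"
  shows "(\<Sum>j\<in>{1..n}-{1}. \<Sum>x\<in>Vals M. pr M e j x * (ind 1 x - ind M x))
       - (\<Sum>j\<in>{1..n}-{3}. \<Sum>x\<in>Vals M. pr M e j x * (ind 1 x - ind M x)) = 1 - 4 * e"
proof -
  note MF = Mfacts[OF assms(1,2)]
  have m: "1 \<in> {1..n}" "3 \<in> {1..n}" using assms by auto
  have d1: "(\<Sum>x\<in>Vals M. pr M e 1 x * (ind 1 x - ind M x)) = 2 * e - 1/2"
    using MF by (simp add: Vals_def pr_def ind_def)
  have d3: "(\<Sum>x\<in>Vals M. pr M e 3 x * (ind 1 x - ind M x)) = 1/2 - 2 * e"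
    using MF by (simp add: Vals_def pr_def ind_def)
  show ?thesis using m d1 d3 by (simp add: sum_diff1)
qed

lemma beta_diff:
  fixes M :: real assumes "M > 0" "M \<noteq> 1" "n \<ge> 3"
  shows "(\<Sum>j\<in>{1..n}-{1}. \<Sum>x\<in>Vals M. pr M e j x * (ind (-(M^2)) x - ind (-1) x))
       - (\<Sum>j\<in>{1..n}-{3}. \<Sum>x\<in>Vals M. pr M e j x * (ind (-(M^2)) x - ind (-1) x)) = 4 * e - 1"
proof -
  note MF = Mfacts[OF assms(1,2)]
  have m: "1 \<in> {1..n}" "3 \<in> {1..n}" using assms by auto
  have d1: "(\<Sum>x\<in>Vals M. pr M e 1 x * (ind (-(M^2)) x - ind (-1) x)) = 1/2 - 2 * e"
    using MF by (simp add: Vals_def pr_def ind_def)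
  have d3: "(\<Sum>x\<in>Vals M. pr M e 3 x * (ind (-(M^2)) x - ind (-1) x)) = 2 * e - 1/2"
    using MF by (simp add: Vals_def pr_def ind_def)
  show ?thesis using m d1 d3 by (simp add: sum_diff1)
qed

lemma cnt_bounds:
  assumes "\<And>y. 0 \<le> \<phi> y" "\<And>y. \<phi> y \<le> 1"
  shows "0 \<le> cnt n \<phi> v" "cnt n \<phi> v \<le> real n"
proof -
  show "0 \<le> cnt n \<phi> v" unfolding cnt_def by (rule sum_nonneg) (use assms in auto)
  have "cnt n \<phi> v \<le> of_nat (card {1..n}) * 1" unfolding cnt_def
    by (rule sum_bounded_above) (use assms in auto)
  then show "cnt n \<phi> v \<le> real n" by simp
qed

lemma F_diff:
  "interim n M e (\<lambda>v. (1 - t) * G v + t * H v) k a - interim n M e (\<lambda>v. (1 - t) * G v + t * H v) k b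
   = (1 - t) * (interim n M e G k a - interim n M e G k b) + t * (interim n M e H k a - interim n M e H k b)"
  by (simp only: interim_add interim_cmult) (simp add: algebra_simps)

lemma G_diff:
  "interim n M e (\<lambda>v. f v + x1 * cnt n \<phi>1 v + y1 * (cnt n \<phi>1 v * cnt n \<psi>1 v) + x2 * cnt n \<phi>2 v + y2 * (cnt n \<phi>2 v * cnt n \<psi>2 v)) k a
   - interim n M e (\<lambda>v. f v + x1 * cnt n \<phi>1 v + y1 * (cnt n \<phi>1 v * cnt n \<psi>1 v) + x2 * cnt n \<phi>2 v + y2 * (cnt n \<phi>2 v * cnt n \<psi>2 v)) k b
   = (interim n M e f k a - interim n M e f k b)
     + x1 * (interim n M e (cnt n \<phi>1) k a - interim n M e (cnt n \<phi>1) k b)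
     + y1 * (interim n M e (\<lambda>v. cnt n \<phi>1 v * cnt n \<psi>1 v) k a - interim n M e (\<lambda>v. cnt n \<phi>1 v * cnt n \<psi>1 v) k b)
     + x2 * (interim n M e (cnt n \<phi>2) k a - interim n M e (cnt n \<phi>2) k b)
     + y2 * (interim n M e (\<lambda>v. cnt n \<phi>2 v * cnt n \<psi>2 v) k a - interim n M e (\<lambda>v. cnt n \<phi>2 v * cnt n \<psi>2 v) k b)"
  by (simp only: interim_add interim_cmult) (simp add: algebra_simps)

lemma lim5:
  fixes g0 x1 c1 y1 c2 x2 c3 y2 c4 :: "real \<Rightarrow> real"
  assumes "(g0 \<longlongrightarrow> A) F" "(x1 \<longlongrightarrow> 0) F" "(c1 \<longlongrightarrow> C1) F" "(y1 \<longlongrightarrow> 0) F" "(c2 \<longlongrightarrow> C2) F"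
    "(x2 \<longlongrightarrow> 0) F" "(c3 \<longlongrightarrow> C3) F" "(y2 \<longlongrightarrow> 0) F" "(c4 \<longlongrightarrow> C4) F"
  shows "((\<lambda>e. g0 e + x1 e * c1 e + y1 e * c2 e + x2 e * c3 e + y2 e * c4 e) \<longlongrightarrow> A) F"
proof -
  have "((\<lambda>e. g0 e + x1 e * c1 e + y1 e * c2 e + x2 e * c3 e + y2 e * c4 e) \<longlongrightarrow> A + 0 * C1 + 0 * C2 + 0 * C3 + 0 * C4) F"
    by (intro tendsto_intros assms)
  then show ?thesis by simp
qed

lemma limF:
  fixes t x1 y1 x2 y2 :: "real \<Rightarrow> real"
  assumes "(t \<longlongrightarrow> 0) F" "(x1 \<longlongrightarrow> 0) F" "(y1 \<longlongrightarrow> 0) F" "(x2 \<longlongrightarrow> 0) F" "(y2 \<longlongrightarrow> 0) F"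
  shows "((\<lambda>e. (1 - t e) * (a + x1 e * c1 + y1 e * c2 + x2 e * c3 + y2 e * c4) + t e * h) \<longlongrightarrow> a) F"
proof -
  have "((\<lambda>e. (1 - t e) * (a + x1 e * c1 + y1 e * c2 + x2 e * c3 + y2 e * c4) + t e * h) \<longlongrightarrow>
     (1 - 0) * (a + 0 * c1 + 0 * c2 + 0 * c3 + 0 * c4) + 0 * h) F"
    by (intro tendsto_intros assms)
  then show ?thesis by simp
qed

lemma limT:
  fixes x1 y1 x2 y2 g1 g3 :: "real \<Rightarrow> real"
  assumes "(x1 \<longlongrightarrow> 0) F" "(y1 \<longlongrightarrow> 0) F" "(x2 \<longlongrightarrow> 0) F" "(y2 \<longlongrightarrow> 0) F"
    "(g1 \<longlongrightarrow> a1) F" "(g3 \<longlongrightarrow> a3) F" "a1 \<ge> 0" "a3 \<ge> 0"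
  shows "((\<lambda>e. min 1 (K * (L * (\<bar>x1 e\<bar> + \<bar>y1 e\<bar> + \<bar>x2 e\<bar> + \<bar>y2 e\<bar>) + (max 0 (- g1 e) + max 0 (- g3 e))))) \<longlongrightarrow> 0) F"
proof -
  have "((\<lambda>e. min 1 (K * (L * (\<bar>x1 e\<bar> + \<bar>y1 e\<bar> + \<bar>x2 e\<bar> + \<bar>y2 e\<bar>) + (max 0 (- g1 e) + max 0 (- g3 e))))) \<longlongrightarrow>
     min 1 (K * (L * (\<bar>0\<bar> + \<bar>0\<bar> + \<bar>0\<bar> + \<bar>0\<bar>) + (max 0 (- a1) + max 0 (- a3))))) F"
    by (intro tendsto_intros assms)
  then show ?thesis using assms(7,8) by simp
qed

lemma range_lo:
  fixes t G h D N c :: real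
  assumes "(1 - t) * G \<ge> (1 - t) * (- D)" "t * D \<ge> 0" "t * h \<ge> t * c" "t * c = D + N" "N \<ge> 0"
  shows "0 \<le> (1 - t) * G + t * h"
proof -
  have "(1 - t) * (- D) = - D + t * D" by (simp add: algebra_simps)
  then show ?thesis using assms by linarith
qed

lemma range_hi:
  fixes t G h D N c :: real
  assumes "(1 - t) * G \<le> (1 - t) * (1 + D)" "t * D \<ge> 0" "t * h \<le> t * (1 - c)" "t * c = D + N" "N \<ge> 0"
  shows "(1 - t) * G + t * h \<le> 1"
proof -
  have "(1 - t) * (1 + D) = 1 - t + D - t * D" by (simp add: algebra_simps)
  moreover have "t * (1 - c) = t - t * c" by (simp add: algebra_simps)
  ultimately show ?thesis using assms by linarith
qed

theorem lemma6:
  fixes n :: nat and M :: real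
  assumes "n \<ge> 3" and "M > 0"
    and A: "2 / real n * (-(M^2) + M + real n - 2) + (real n - 2) / real n * (2*M + real n - 4) < 0"
    and B: "2*M - (real n - 2) > 0"
  shows "\<exists>eb::real. 0 < eb \<and> eb \<le> 1/4 \<and>
    (\<forall>f. is_SCF n M f \<and> anonymous n M f \<and> BIC n M 0 f \<longrightarrow>
      (\<exists>F :: real \<Rightarrow> (nat \<Rightarrow> real) \<Rightarrow> real.
        (\<forall>eps\<in>{0<..eb}. is_SCF n M (F eps) \<and> anonymous n M (F eps) \<and> BIC n M eps (F eps)) \<and>
        (\<forall>v\<in>profiles n M. ((\<lambda>eps. F eps v) \<longlongrightarrow> f v) (at_right 0))))"
proof -
  have Mp: "M > 0" and n3: "n \<ge> 3" using assms by auto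
  have M1: "M \<noteq> 1"
  proof
    assume M: "M = 1"
    have e1: "-(M^2) + M + real n - 2 = real n - 2" using M by simp
    have e2: "2*M + real n - 4 = real n - 2" using M by simp
    have p1: "0 \<le> 2 / real n * (real n - 2)"
      by (intro mult_nonneg_nonneg divide_nonneg_nonneg) (use n3 in auto)
    have p2: "0 \<le> (real n - 2) / real n * (real n - 2)"
      by (intro mult_nonneg_nonneg divide_nonneg_nonneg) (use n3 in auto)
    show False using A[unfolded e1 e2] p1 p2 by linarith
  qed
  note MF = Mfacts[OF Mp M1]
  have k13: "1 \<in> {1..n}" "3 \<in> {1..n}" using n3 by auto
  have indv: "ind M M = 1" "ind M 1 = 0" "ind 1 M = 0" "ind 1 1 = 1" "ind (-1) M = 0" "ind (-1) 1 = 0"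
     "ind (-(M^2)) M = 0" "ind (-(M^2)) 1 = 0"
     "ind M (-1) = 0" "ind M (-(M^2)) = 0" "ind 1 (-1) = 0" "ind 1 (-(M^2)) = 0"
     "ind (-1) (-1) = 1" "ind (-1) (-(M^2)) = 0" "ind (-(M^2)) (-1) = 0" "ind (-(M^2)) (-(M^2)) = 1"
    using MF by (auto simp: ind_def)
  have posv: "posi M = 1" "posi 1 = 1" "posi (-1) = 0" using Mp by (auto simp: posi_def)
  have ind01: "0 \<le> ind x y" "ind x y \<le> 1" for x y by (auto simp: ind_def)
  have posi01: "0 \<le> posi y" "posi y \<le> 1" for y by (auto simp: posi_def)
  define c where "c = 1 / (real n + 2)"
  have cpos: "c > 0" unfolding c_def by (simp add: add_pos_nonneg)
  have nc: "(real n + 2) * c = 1" unfolding c_def by simp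
  show ?thesis
  proof (intro exI[of _ "1/8"] conjI allI impI)
    show "(0::real) < 1/8" by simp
    show "(1::real)/8 \<le> 1/4" by simp
    fix f assume "is_SCF n M f \<and> anonymous n M f \<and> BIC n M 0 f"
    then have scf: "is_SCF n M f" and anf: "anonymous n M f" and bic0: "BIC n M 0 f" by auto
    define r where "r k e = interim n M e f k M - interim n M e f k 1" for k e
    define s where "s k e = interim n M e f k (-1) - interim n M e f k (-(M^2))" for k e
    define al where "al k e = (\<Sum>j\<in>{1..n}-{k}. \<Sum>x\<in>Vals M. pr M e j x * (ind 1 x - ind M x))" for k e
    define be where "be k e = (\<Sum>j\<in>{1..n}-{k}. \<Sum>x\<in>Vals M. pr M e j x * (ind (-(M^2)) x - ind (-1) x))" for k e
    define y1 where "y1 e = (r 3 e - r 1 e) / (1 - 4 * e)" for e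
    define x1 where "x1 e = - r 1 e - y1 e * al 1 e" for e
    define y2 where "y2 e = (s 3 e - s 1 e) / (4 * e - 1)" for e
    define x2 where "x2 e = - s 1 e - y2 e * be 1 e" for e
    define G where "G e = (\<lambda>v. f v + x1 e * cnt n (ind M) v + y1 e * (cnt n (ind M) v * cnt n (ind 1) v)
        + x2 e * cnt n (ind (-1)) v + y2 e * (cnt n (ind (-1)) v * cnt n (ind (-(M^2))) v))" for e
    define gG where "gG k e = interim n M e (G e) k 1 - interim n M e (G e) k (-1)" for k e
    define D where "D e = real n ^ 2 * (\<bar>x1 e\<bar> + \<bar>y1 e\<bar> + \<bar>x2 e\<bar> + \<bar>y2 e\<bar>)" for e
    define N where "N e = max 0 (- gG 1 e) + max 0 (- gG 3 e)" for e
    define t where "t e = min 1 ((real n + 2) * (D e + N e))" for e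
    define F where "F e = (\<lambda>v. (1 - t e) * G e v + t e * hh n v)" for e

    have al_eq: "al k e = interim n M e (\<lambda>v. cnt n (ind M) v * cnt n (ind 1) v) k M
        - interim n M e (\<lambda>v. cnt n (ind M) v * cnt n (ind 1) v) k 1" if "k \<in> {1..n}" for k e
      using interim_prod_diff[where \<phi>="ind M" and \<psi>="ind 1" and a=M and b=1 and e=e,
          OF Mp M1 that indv(1) indv(2) indv(3) indv(4)]
      by (simp add: al_def)
    have be_eq: "be k e = interim n M e (\<lambda>v. cnt n (ind (-1)) v * cnt n (ind (-(M^2))) v) k (-1)
        - interim n M e (\<lambda>v. cnt n (ind (-1)) v * cnt n (ind (-(M^2))) v) k (-(M^2))" if "k \<in> {1..n}" for k e
      using interim_prod_diff[where \<phi>="ind (-1)" and \<psi>="ind (-(M^2))" and a="-1" and b="-(M^2)" and e=e,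
          OF Mp M1 that indv(13) indv(14) indv(15) indv(16)]
      by (simp add: be_def)
    have ald: "al 1 e - al 3 e = 1 - 4 * e" for e
      unfolding al_def by (rule alpha_diff[OF Mp M1 n3])
    have bed: "be 1 e - be 3 e = 4 * e - 1" for e
      unfolding be_def by (rule beta_diff[OF Mp M1 n3])

    have rlim: "((\<lambda>e. r k e) \<longlongrightarrow> 0) (at_right 0)" if "k \<in> {1..n}" for k
    proof -
      have "((\<lambda>e. r k e) \<longlongrightarrow> r k 0) (at_right 0)" unfolding r_def by (intro tendsto_diff interim_tendsto)
      moreover have "r k 0 = 0" using BIC_D(1)[OF bic0 that Mp] by (simp add: r_def)
      ultimately show ?thesis by simp
    qed
    have slim: "((\<lambda>e. s k e) \<longlongrightarrow> 0) (at_right 0)" if "k \<in> {1..n}" for k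
    proof -
      have "((\<lambda>e. s k e) \<longlongrightarrow> s k 0) (at_right 0)" unfolding s_def by (intro tendsto_diff interim_tendsto)
      moreover have "s k 0 = 0" using BIC_D(2)[OF bic0 that Mp] by (simp add: s_def)
      ultimately show ?thesis by simp
    qed
    have allim: "((\<lambda>e. al 1 e) \<longlongrightarrow> al 1 0) (at_right 0)"
      unfolding al_eq[OF k13(1)] by (intro tendsto_diff interim_tendsto)
    have belim: "((\<lambda>e. be 1 e) \<longlongrightarrow> be 1 0) (at_right 0)"
      unfolding be_eq[OF k13(1)] by (intro tendsto_diff interim_tendsto)
    have y1lim: "((\<lambda>e. y1 e) \<longlongrightarrow> 0) (at_right 0)"
    proof -
      have "((\<lambda>e. (r 3 e - r 1 e) / (1 - 4 * e)) \<longlongrightarrow> (0 - 0) / (1 - 4 * 0)) (at_right 0)"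
        by (intro tendsto_intros rlim k13) simp
      then show ?thesis by (simp add: y1_def)
    qed
    have y2lim: "((\<lambda>e. y2 e) \<longlongrightarrow> 0) (at_right 0)"
    proof -
      have "((\<lambda>e. (s 3 e - s 1 e) / (4 * e - 1)) \<longlongrightarrow> (0 - 0) / (4 * 0 - 1)) (at_right 0)"
        by (intro tendsto_intros slim k13) simp
      then show ?thesis by (simp add: y2_def)
    qed
    have x1lim: "((\<lambda>e. x1 e) \<longlongrightarrow> 0) (at_right 0)"
    proof -
      have "((\<lambda>e. - r 1 e - y1 e * al 1 e) \<longlongrightarrow> - 0 - 0 * al 1 0) (at_right 0)"
        by (intro tendsto_intros rlim k13 y1lim allim)
      then show ?thesis by (simp add: x1_def)
    qed
    have x2lim: "((\<lambda>e. x2 e) \<longlongrightarrow> 0) (at_right 0)"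
    proof -
      have "((\<lambda>e. - s 1 e - y2 e * be 1 e) \<longlongrightarrow> - 0 - 0 * be 1 0) (at_right 0)"
        by (intro tendsto_intros slim k13 y2lim belim)
      then show ?thesis by (simp add: x2_def)
    qed
    have gG_exp: "gG k e = (interim n M e f k 1 - interim n M e f k (-1))
     + x1 e * (interim n M e (cnt n (ind M)) k 1 - interim n M e (cnt n (ind M)) k (-1))
     + y1 e * (interim n M e (\<lambda>v. cnt n (ind M) v * cnt n (ind 1) v) k 1 - interim n M e (\<lambda>v. cnt n (ind M) v * cnt n (ind 1) v) k (-1))
     + x2 e * (interim n M e (cnt n (ind (-1))) k 1 - interim n M e (cnt n (ind (-1))) k (-1))
     + y2 e * (interim n M e (\<lambda>v. cnt n (ind (-1)) v * cnt n (ind (-(M^2))) v) k 1 - interim n M e (\<lambda>v. cnt n (ind (-1)) v * cnt n (ind (-(M^2))) v) k (-1))"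
      for k e unfolding gG_def G_def by (rule G_diff)
    have gGlim: "((\<lambda>e. gG k e) \<longlongrightarrow> interim n M 0 f k 1 - interim n M 0 f k (-1)) (at_right 0)" for k
      unfolding gG_exp by (rule lim5, (rule tendsto_diff interim_tendsto x1lim y1lim x2lim y2lim)+)
    have gap0: "interim n M 0 f k 1 - interim n M 0 f k (-1) \<ge> 0" if "k \<in> {1..n}" for k
      using BIC_D(3)[OF bic0 that Mp] by simp
    have tlim: "((\<lambda>e. t e) \<longlongrightarrow> 0) (at_right 0)"
      unfolding t_def D_def N_def
      by (rule limT[OF x1lim y1lim x2lim y2lim gGlim gGlim gap0[OF k13(1)] gap0[OF k13(2)]])

    show "\<exists>F :: real \<Rightarrow> (nat \<Rightarrow> real) \<Rightarrow> real.
        (\<forall>eps\<in>{0<..1/8}. is_SCF n M (F eps) \<and> anonymous n M (F eps) \<and> BIC n M eps (F eps)) \<and>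
        (\<forall>v\<in>profiles n M. ((\<lambda>eps. F eps v) \<longlongrightarrow> f v) (at_right 0))"
    proof (rule exI[of _ F], rule conjI)
      show "\<forall>v\<in>profiles n M. ((\<lambda>eps. F eps v) \<longlongrightarrow> f v) (at_right 0)"
      proof
      fix v assume v: "v \<in> profiles n M"
      show "((\<lambda>eps. F eps v) \<longlongrightarrow> f v) (at_right 0)"
        unfolding F_def G_def by (intro limF tlim x1lim y1lim x2lim y2lim)
      qed
    next
      show "\<forall>eps\<in>{0<..1/8}. is_SCF n M (F eps) \<and> anonymous n M (F eps) \<and> BIC n M eps (F eps)"
      proof
      fix e :: real assume e: "e \<in> {0<..1/8}"
      show "is_SCF n M (F e) \<and> anonymous n M (F e) \<and> BIC n M e (F e)"
      proof -
        have e0: "0 < e" "e \<le> 1/8" using e by auto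
        have den1: "1 - 4 * e \<noteq> 0" and den2: "4 * e - 1 \<noteq> 0" using e0 by auto
        have Dnn: "D e \<ge> 0" unfolding D_def by simp
        have Nnn: "N e \<ge> 0" unfolding N_def by simp
        have Nk: "max 0 (- gG k e) \<le> N e" if "k \<in> {1,3}" for k
          using that unfolding N_def by auto
        have t01: "0 \<le> t e" "t e \<le> 1" unfolding t_def using Dnn Nnn by auto
        have tcase: "t e = 1 \<or> t e * c = D e + N e"
        proof (cases "(real n + 2) * (D e + N e) \<le> 1")
          case True
          then have "t e = (real n + 2) * (D e + N e)" unfolding t_def by simp
          then have "t e * c = (D e + N e) * ((real n + 2) * c)" by simp
          then show ?thesis using nc by simp
        next
          case False then show ?thesis unfolding t_def by simp
        qed
        have upeq: "r k e + x1 e + y1 e * al k e = 0" if "k \<in> {1,3}" for k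
        proof -
          have y1e: "y1 e * (1 - 4 * e) = r 3 e - r 1 e" unfolding y1_def using den1 by simp
          show ?thesis using that
          proof
            assume "k = 1" then show ?thesis by (simp add: x1_def)
          next
            assume "k \<in> {3}"
            then have k: "k = 3" by simp
            have "r 3 e + x1 e + y1 e * al 3 e = r 3 e - r 1 e - y1 e * (al 1 e - al 3 e)"
              by (simp add: x1_def algebra_simps)
            also have "\<dots> = 0" using y1e ald[of e] by simp
            finally show ?thesis using k by simp
          qed
        qed
        have dneq: "s k e + x2 e + y2 e * be k e = 0" if "k \<in> {1,3}" for k
        proof -
          have y2e: "y2 e * (4 * e - 1) = s 3 e - s 1 e" unfolding y2_def using den2 by simp
          show ?thesis using that
          proof
            assume "k = 1" then show ?thesis by (simp add: x2_def)
          next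
            assume "k \<in> {3}"
            then have k: "k = 3" by simp
            have "s 3 e + x2 e + y2 e * be 3 e = s 3 e - s 1 e - y2 e * (be 1 e - be 3 e)"
              by (simp add: x2_def algebra_simps)
            also have "\<dots> = 0" using y2e bed[of e] by simp
            finally show ?thesis using k by simp
          qed
        qed
        have upG: "interim n M e (G e) k M - interim n M e (G e) k 1 = r k e + x1 e + y1 e * al k e"
          if k: "k \<in> {1..n}" for k
        proof -
          have a1: "interim n M e (cnt n (ind M)) k M - interim n M e (cnt n (ind M)) k 1 = 1"
            using interim_cnt_diff[OF Mp M1 k] indv by simp
          have a2: "interim n M e (cnt n (ind (-1))) k M - interim n M e (cnt n (ind (-1))) k 1 = 0"
            using interim_cnt_diff[OF Mp M1 k] indv by simp
          have a3: "interim n M e (\<lambda>v. cnt n (ind (-1)) v * cnt n (ind (-(M^2))) v) k M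
             - interim n M e (\<lambda>v. cnt n (ind (-1)) v * cnt n (ind (-(M^2))) v) k 1 = 0"
            by (rule interim_prod_same[OF Mp M1 k]) (simp_all add: indv)
          show ?thesis unfolding G_def G_diff r_def using a1 a2 a3 al_eq[OF k, of e] by simp
        qed
        have dnG: "interim n M e (G e) k (-1) - interim n M e (G e) k (-(M^2)) = s k e + x2 e + y2 e * be k e"
          if k: "k \<in> {1..n}" for k
        proof -
          have a1: "interim n M e (cnt n (ind M)) k (-1) - interim n M e (cnt n (ind M)) k (-(M^2)) = 0"
            using interim_cnt_diff[OF Mp M1 k] indv by simp
          have a2: "interim n M e (cnt n (ind (-1))) k (-1) - interim n M e (cnt n (ind (-1))) k (-(M^2)) = 1"
            using interim_cnt_diff[OF Mp M1 k] indv by simp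
          have a3: "interim n M e (\<lambda>v. cnt n (ind M) v * cnt n (ind 1) v) k (-1)
             - interim n M e (\<lambda>v. cnt n (ind M) v * cnt n (ind 1) v) k (-(M^2)) = 0"
            by (rule interim_prod_same[OF Mp M1 k]) (simp_all add: indv)
          show ?thesis unfolding G_def G_diff s_def using a1 a2 a3 be_eq[OF k, of e] by simp
        qed
        have bick: "interim n M e (F e) k M = interim n M e (F e) k 1 \<and>
            interim n M e (F e) k (-1) = interim n M e (F e) k (-(M^2)) \<and>
            interim n M e (F e) k 1 \<ge> interim n M e (F e) k (-1)" if k13': "k \<in> {1,3}" for k
        proof -
          have k: "k \<in> {1..n}" using k13' k13 by auto
          have h1: "interim n M e (hh n) k M - interim n M e (hh n) k 1 = 0"
            using interim_hh_diff[OF Mp M1 k] posv by simp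
          have h2: "interim n M e (hh n) k (-1) - interim n M e (hh n) k (-(M^2)) = 0"
            using interim_hh_diff[OF Mp M1 k] Mp by (simp add: posi_def)
          have h3: "interim n M e (hh n) k 1 - interim n M e (hh n) k (-1) = c"
            using interim_hh_diff[OF Mp M1 k] posv by (simp add: c_def)
          have u: "interim n M e (F e) k M - interim n M e (F e) k 1 = 0"
            unfolding F_def F_diff using upG[OF k] upeq[OF k13'] h1 by simp
          have d: "interim n M e (F e) k (-1) - interim n M e (F e) k (-(M^2)) = 0"
            unfolding F_def F_diff using dnG[OF k] dneq[OF k13'] h2 by simp
          have g: "interim n M e (F e) k 1 - interim n M e (F e) k (-1) = (1 - t e) * gG k e + t e * c"
            unfolding F_def F_diff gG_def using h3 by simp
          have gnn: "(1 - t e) * gG k e + t e * c \<ge> 0"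
            using tcase
          proof
            assume "t e = 1" then show ?thesis using cpos by simp
          next
            assume tc: "t e * c = D e + N e"
            show ?thesis
            proof (cases "gG k e \<ge> 0")
              case True
              have "(1 - t e) * gG k e \<ge> 0" using True t01 by simp
              moreover have "t e * c \<ge> 0" using t01 cpos by simp
              ultimately show ?thesis by linarith
            next
              case False
              have "t e * gG k e \<le> 0" using False t01 by (simp add: mult_nonneg_nonpos)
              then have "(1 - t e) * gG k e \<ge> gG k e" by (simp add: algebra_simps)
              moreover have "N e \<ge> - gG k e" using Nk[OF k13'] by simp
              ultimately show ?thesis using tc Dnn by linarith
            qed
          qed
          show ?thesis using u d g gnn by simp
        qed
        have anF: "anonymous n M (F e)"
          unfolding anonymous_def
        proof (intro ballI allI impI)
          fix v :: "nat \<Rightarrow> real" and \<pi> assume v: "v \<in> profiles n M" and p: "\<pi> permutes {1..n}"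
          have "f (v \<circ> \<pi>) = f v" using anf v p unfolding anonymous_def by blast
          then show "F e (v \<circ> \<pi>) = F e v"
            unfolding F_def G_def hh_def by (simp add: cnt_perm[OF p])
        qed
        have bicF: "BIC n M e (F e)"
          proof (rule BIC_I[OF anF n3 Mp])
          fix k assume "k \<in> {1::nat,3}"
          note B = bick[OF this]
          show "interim n M e (F e) k M = interim n M e (F e) k 1" using B by blast
          show "interim n M e (F e) k (-1) = interim n M e (F e) k (-(M^2))" using B by blast
          show "interim n M e (F e) k 1 \<ge> interim n M e (F e) k (-1)" using B by blast
        qed
        have scfF: "is_SCF n M (F e)"
          unfolding is_SCF_def
        proof
          fix v assume v: "v \<in> profiles n M"
          have fb: "0 \<le> f v" "f v \<le> 1" using scf v unfolding is_SCF_def by auto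
          define A1 where "A1 = cnt n (ind M) v"
          define B1 where "B1 = cnt n (ind 1) v"
          define A2 where "A2 = cnt n (ind (-1)) v"
          define B2 where "B2 = cnt n (ind (-(M^2))) v"
          define P where "P = cnt n posi v"
          have b01: "0 \<le> A1" "A1 \<le> real n" "0 \<le> B1" "B1 \<le> real n" "0 \<le> A2" "A2 \<le> real n"
            "0 \<le> B2" "B2 \<le> real n" "0 \<le> P" "P \<le> real n"
            unfolding A1_def B1_def A2_def B2_def P_def
            using cnt_bounds[of "ind M", OF ind01] cnt_bounds[of "ind 1", OF ind01]
              cnt_bounds[of "ind (-1)", OF ind01] cnt_bounds[of "ind (-(M^2))", OF ind01]
              cnt_bounds[of posi, OF posi01] by auto
          have nn2: "real n \<le> real n ^ 2" using n3 by (simp add: power2_eq_square)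
          have sq1: "A1 * B1 \<le> real n ^ 2" using mult_mono[OF b01(2) b01(4)] b01 by (simp add: power2_eq_square)
          have sq2: "A2 * B2 \<le> real n ^ 2" using mult_mono[OF b01(6) b01(8)] b01 by (simp add: power2_eq_square)
          have s1: "\<bar>x1 e * A1\<bar> \<le> \<bar>x1 e\<bar> * real n ^ 2"
            using mult_left_mono[OF order_trans[OF b01(2) nn2], of "\<bar>x1 e\<bar>"] b01 by (simp add: abs_mult)
          have s2: "\<bar>y1 e * (A1 * B1)\<bar> \<le> \<bar>y1 e\<bar> * real n ^ 2"
            using mult_left_mono[OF sq1, of "\<bar>y1 e\<bar>"] b01 by (simp add: abs_mult)
          have s3: "\<bar>x2 e * A2\<bar> \<le> \<bar>x2 e\<bar> * real n ^ 2"
            using mult_left_mono[OF order_trans[OF b01(6) nn2], of "\<bar>x2 e\<bar>"] b01 by (simp add: abs_mult)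
          have s4: "\<bar>y2 e * (A2 * B2)\<bar> \<le> \<bar>y2 e\<bar> * real n ^ 2"
            using mult_left_mono[OF sq2, of "\<bar>y2 e\<bar>"] b01 by (simp add: abs_mult)
          have Deq: "D e = \<bar>x1 e\<bar> * real n ^ 2 + \<bar>y1 e\<bar> * real n ^ 2 + \<bar>x2 e\<bar> * real n ^ 2 + \<bar>y2 e\<bar> * real n ^ 2"
            unfolding D_def by (simp add: algebra_simps)
          have Gv: "G e v = f v + x1 e * A1 + y1 e * (A1 * B1) + x2 e * A2 + y2 e * (A2 * B2)"
            unfolding G_def A1_def B1_def A2_def B2_def by simp
          have Glo: "G e v \<ge> - D e" and Ghi: "G e v \<le> 1 + D e"
            using Gv Deq s1 s2 s3 s4 fb abs_le_iff by (smt (verit))+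
          have hv: "hh n v = (1 + P) * c" unfolding hh_def P_def c_def by simp
          have hlo: "hh n v \<ge> c" using hv b01 cpos by (simp add: algebra_simps)
          have hhi: "hh n v \<le> 1 - c"
          proof -
            have "(1 + P) * c \<le> (1 + real n) * c" using b01 cpos by (intro mult_right_mono) auto
            also have "\<dots> = 1 - c" using nc by (simp add: algebra_simps)
            finally show ?thesis using hv by simp
          qed
          have Fv: "F e v = (1 - t e) * G e v + t e * hh n v" unfolding F_def by simp
          show "0 \<le> F e v \<and> F e v \<le> 1"
            using tcase
          proof
            assume "t e = 1"
            then show ?thesis using Fv hlo hhi cpos by simp
          next
            assume tc: "t e * c = D e + N e"
            have h1: "(1 - t e) * G e v \<ge> (1 - t e) * (- D e)" using Glo t01 by (intro mult_left_mono) auto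
            have h1': "(1 - t e) * G e v \<le> (1 - t e) * (1 + D e)" using Ghi t01 by (intro mult_left_mono) auto
            have h3: "t e * D e \<ge> 0" using t01 Dnn by simp
            have h4: "t e * hh n v \<ge> t e * c" using hlo t01 by (intro mult_left_mono) auto
            have h4': "t e * hh n v \<le> t e * (1 - c)" using hhi t01 by (intro mult_left_mono) auto
            have e1: "(1 - t e) * (- D e) = - D e + t e * D e" by (simp add: algebra_simps)
            have e2: "(1 - t e) * (1 + D e) = 1 - t e + D e - t e * D e" by (simp add: algebra_simps)
            have e3: "t e * (1 - c) = t e - t e * c" by (simp add: algebra_simps)
            have lo: "0 \<le> (1 - t e) * G e v + t e * hh n v" by (rule range_lo[OF h1 h3 h4 tc Nnn])
            have hi: "(1 - t e) * G e v + t e * hh n v \<le> 1" by (rule range_hi[OF h1' h3 h4' tc Nnn])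
            show ?thesis unfolding Fv using lo hi by blast
          qed
        qed
        show ?thesis using scfF anF bicF by simp
      qed
      qed
    qed
  qed
qed

end
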